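(* Let $\sigma=\{\sigma_z\}_{z\in\mathbb{Z}}$ be i.i.d. strictly positive random variables with law $\mathbf{P}$, with $L(x):=1/\mathbf{P}(\sigma_0>x)$ slowly varying at infinity (i.e. $\lim_{u\to\infty}L(uv)/L(u)=1$ for every $v>0$). Let $h_t$ be any function with $h_t\to\infty$, $h_t^2=o(r_t)$, and such that, for all sufficiently large $t$, \[ L(\ell_t/h_t^3)>L(\ell_t)(1-1/h_t)\quad\text{and}\quad L(\ell_th_t^3)<L(\ell_t)(1+1/h_t).\] Then $\mathbf{P}(\mathcal{A}^h_t)\to1$ as $t\to\infty$, where $\mathcal{A}^h_t:=\{S_td_t<t/h_t\}$.
   Context: $\ell_t:=\min\{s\ge0: sL(s)\ge t\}$, $r_t:=L(\ell_t)$, $Z^{(1)}_t:=\min\{z\in\mathbb{Z}^+:\sigma_z>\ell_t\}$, $Z^{(2)}_t:=\max\{z\in\mathbb{Z}^-:\sigma_z>\ell_t\}$ (with $\mathbb{Z}^+$ the positive and $\mathbb{Z}^-$ the non-positive integers), $\Gamma_t:=\{Z^{(1)}_t,Z^{(2)}_t\}$, $S_t:=\sum_{Z^{(2)}_t<z<Z^{(1)}_t}\sigma_z$ and $d_t:=\max_{z\in\Gamma_t}|z|$. *)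

theory Defs
  imports "HOL-Probability.Probability" "HOL-Library.Landau_Symbols"
begin

definition tailL :: "'a measure \<Rightarrow> (int \<Rightarrow> 'a \<Rightarrow> real) \<Rightarrow> real \<Rightarrow> real" where
  "tailL M \<sigma> x = 1 / measure M {\<omega> \<in> space M. \<sigma> 0 \<omega> > x}"

definition slowly_varying :: "(real \<Rightarrow> real) \<Rightarrow> bool" where
  "slowly_varying L \<longleftrightarrow> (\<forall>v>0. ((\<lambda>u. L (u * v) / L u) \<longlongrightarrow> 1) at_top)"

text \<open>ell_t = min {s >= 0 : s L(s) >= t} (the minimum exists by right-continuity; written as Inf).\<close>
definition ellt :: "'a measure \<Rightarrow> (int \<Rightarrow> 'a \<Rightarrow> real) \<Rightarrow> real \<Rightarrow> real" where
  "ellt M \<sigma> t = Inf {s. s \<ge> 0 \<and> s * tailL M \<sigma> s \<ge> t}"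

definition rt :: "'a measure \<Rightarrow> (int \<Rightarrow> 'a \<Rightarrow> real) \<Rightarrow> real \<Rightarrow> real" where
  "rt M \<sigma> t = tailL M \<sigma> (ellt M \<sigma> t)"

definition Z1 :: "'a measure \<Rightarrow> (int \<Rightarrow> 'a \<Rightarrow> real) \<Rightarrow> real \<Rightarrow> 'a \<Rightarrow> int" where
  "Z1 M \<sigma> t \<omega> = int (LEAST n::nat. n \<ge> 1 \<and> \<sigma> (int n) \<omega> > ellt M \<sigma> t)"

definition Z2 :: "'a measure \<Rightarrow> (int \<Rightarrow> 'a \<Rightarrow> real) \<Rightarrow> real \<Rightarrow> 'a \<Rightarrow> int" where
  "Z2 M \<sigma> t \<omega> = - int (LEAST n::nat. \<sigma> (- int n) \<omega> > ellt M \<sigma> t)"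

definition St :: "'a measure \<Rightarrow> (int \<Rightarrow> 'a \<Rightarrow> real) \<Rightarrow> real \<Rightarrow> 'a \<Rightarrow> real" where
  "St M \<sigma> t \<omega> = (\<Sum>z\<in>{Z2 M \<sigma> t \<omega> <..< Z1 M \<sigma> t \<omega>}. \<sigma> z \<omega>)"

definition dt :: "'a measure \<Rightarrow> (int \<Rightarrow> 'a \<Rightarrow> real) \<Rightarrow> real \<Rightarrow> 'a \<Rightarrow> int" where
  "dt M \<sigma> t \<omega> = max \<bar>Z1 M \<sigma> t \<omega>\<bar> \<bar>Z2 M \<sigma> t \<omega>\<bar>"

definition event_A :: "'a measure \<Rightarrow> (int \<Rightarrow> 'a \<Rightarrow> real) \<Rightarrow> (real \<Rightarrow> real) \<Rightarrow> real \<Rightarrow> 'a set" where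
  "event_A M \<sigma> h t = {\<omega> \<in> space M. St M \<sigma> t \<omega> * real_of_int (dt M \<sigma> t \<omega>) < t / h t}"

end

theory Submission
  imports Defs "HOL-Real_Asymp.Real_Asymp"
begin

lemma det_bound:
  fixes s :: "int \<Rightarrow> real" and K :: nat and l y c :: real
  assumes K1: "K \<ge> 1"
    and ex1: "\<exists>n\<in>{1..K}. s (int n) > l"
    and ex2: "\<exists>n\<in>{0..K}. s (- int n) > l"
    and pos: "\<forall>z\<in>{-int K..int K}. s z > 0"
    and gap: "\<forall>z\<in>{-int K..int K}. \<not> (y < s z \<and> s z \<le> l)"
    and T: "(\<Sum>z\<in>{-int K..int K}. (if 0 \<le> s z \<and> s z \<le> y then s z else 0)) * K < c"
  shows "(\<Sum>z\<in>{- int (LEAST n::nat. s (- int n) > l) <..< int (LEAST n::nat. n \<ge> 1 \<and> s (int n) > l)}. s z)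
          * real_of_int (max \<bar>int (LEAST n::nat. n \<ge> 1 \<and> s (int n) > l)\<bar> \<bar>- int (LEAST n::nat. s (- int n) > l)\<bar>) < c"
proof -
  define n0 where "n0 = (LEAST n::nat. n \<ge> 1 \<and> s (int n) > l)"
  define m0 where "m0 = (LEAST n::nat. s (- int n) > l)"
  obtain a where a: "a \<in> {1..K}" "s (int a) > l" using ex1 by auto
  obtain b where b: "b \<in> {0..K}" "s (- int b) > l" using ex2 by auto
  have "n0 \<le> a" unfolding n0_def by (rule Least_le) (use a in auto)
  then have n0K: "n0 \<le> K" using a by auto
  have "m0 \<le> b" unfolding m0_def by (rule Least_le) (use b in auto)
  then have m0K: "m0 \<le> K" using b by auto
  define f where "f = (\<lambda>x. if 0 \<le> x \<and> x \<le> y then x else (0::real))"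
  have sub: "{- int m0 <..< int n0} \<subseteq> {-int K..int K}" using n0K m0K by auto
  have inner: "s z \<le> l" if "z \<in> {- int m0 <..< int n0}" for z
  proof (cases "z \<ge> 1")
    case True
    then have "nat z < n0" using that by auto
    then have "\<not> (nat z \<ge> 1 \<and> s (int (nat z)) > l)" unfolding n0_def by (rule not_less_Least)
    then show ?thesis using True by auto
  next
    case False
    then have "nat (-z) < m0" using that by auto
    then have "\<not> (s (- int (nat (-z))) > l)" unfolding m0_def by (rule not_less_Least)
    then show ?thesis using False by auto
  qed
  have eqf: "s z = f (s z)" if "z \<in> {- int m0 <..< int n0}" for z
    using inner[OF that] gap pos sub that unfolding f_def by force
  have S_le: "(\<Sum>z\<in>{- int m0 <..< int n0}. s z) \<le> (\<Sum>z\<in>{-int K..int K}. f (s z))"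
  proof -
    have "(\<Sum>z\<in>{- int m0 <..< int n0}. s z) = (\<Sum>z\<in>{- int m0 <..< int n0}. f (s z))"
      using eqf by (intro sum.cong) auto
    also have "\<dots> \<le> (\<Sum>z\<in>{-int K..int K}. f (s z))"
      by (rule sum_mono2[OF _ sub]) (auto simp: f_def)
    finally show ?thesis .
  qed
  have S0: "0 \<le> (\<Sum>z\<in>{- int m0 <..< int n0}. s z)"
    using pos sub by (intro sum_nonneg) (auto simp: less_imp_le)
  have d: "real_of_int (max \<bar>int n0\<bar> \<bar>- int m0\<bar>) \<le> real K" using n0K m0K by auto
  have d0: "0 \<le> real_of_int (max \<bar>int n0\<bar> \<bar>- int m0\<bar>)" by auto
  have "(\<Sum>z\<in>{- int m0 <..< int n0}. s z) * real_of_int (max \<bar>int n0\<bar> \<bar>- int m0\<bar>)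
     \<le> (\<Sum>z\<in>{-int K..int K}. f (s z)) * real K"
    by (rule mult_mono'[OF S_le d S0 d0])
  also have "\<dots> < c" using T unfolding f_def by simp
  finally show ?thesis unfolding n0_def m0_def .
qed


locale setting = prob_space M for M :: "'a measure" +
  fixes \<sigma> :: "int \<Rightarrow> 'a \<Rightarrow> real"
  assumes meas[measurable]: "\<And>z. \<sigma> z \<in> borel_measurable M"
    and ident: "\<And>z. distr M borel (\<sigma> z) = distr M borel (\<sigma> 0)"
    and slow: "slowly_varying (tailL M \<sigma>)"
begin

definition F :: "real \<Rightarrow> real" where
  "F x = prob {\<omega>\<in>space M. \<sigma> 0 \<omega> > x}"

lemma tailL_F: "tailL M \<sigma> x = 1 / F x"
  by (simp add: tailL_def F_def)

lemma F_nonneg: "0 \<le> F x" by (simp add: F_def)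
lemma F_le1: "F x \<le> 1" by (simp add: F_def)

lemma F_mono: "x \<le> x' \<Longrightarrow> F x' \<le> F x"
  unfolding F_def by (rule finite_measure_mono) auto

lemma prob_ident:
  assumes "B \<in> sets borel"
  shows "prob (\<sigma> z -` B \<inter> space M) = prob (\<sigma> 0 -` B \<inter> space M)"
  using measure_distr[OF meas[of z] assms] measure_distr[OF meas[of 0] assms] ident[of z]
  by simp

lemma prob_gt: "prob {\<omega>\<in>space M. \<sigma> z \<omega> > x} = F x"
proof -
  have "prob {\<omega>\<in>space M. \<sigma> z \<omega> > x} = prob (\<sigma> z -` {x<..} \<inter> space M)"
    by (rule arg_cong[where f=prob]) auto
  also have "\<dots> = prob (\<sigma> 0 -` {x<..} \<inter> space M)" by (rule prob_ident) auto
  also have "\<dots> = F x" unfolding F_def by (rule arg_cong[where f=prob]) auto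
  finally show ?thesis .
qed

lemma prob_le: "prob {\<omega>\<in>space M. \<sigma> z \<omega> \<le> x} = 1 - F x"
proof -
  have "{\<omega>\<in>space M. \<sigma> z \<omega> \<le> x} = space M - {\<omega>\<in>space M. \<sigma> z \<omega> > x}" by auto
  then show ?thesis using prob_compl[of "{\<omega>\<in>space M. \<sigma> z \<omega> > x}"] prob_gt by simp
qed

lemma prob_between:
  assumes "y \<le> l"
  shows "prob {\<omega>\<in>space M. y < \<sigma> z \<omega> \<and> \<sigma> z \<omega> \<le> l} = F y - F l"
proof -
  have "{\<omega>\<in>space M. \<sigma> z \<omega> > y} = {\<omega>\<in>space M. y < \<sigma> z \<omega> \<and> \<sigma> z \<omega> \<le> l} \<union> {\<omega>\<in>space M. \<sigma> z \<omega> > l}"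
    using assms by auto
  then have "prob {\<omega>\<in>space M. \<sigma> z \<omega> > y} = prob {\<omega>\<in>space M. y < \<sigma> z \<omega> \<and> \<sigma> z \<omega> \<le> l} + prob {\<omega>\<in>space M. \<sigma> z \<omega> > l}"
  proof -
    assume eq: "{\<omega>\<in>space M. \<sigma> z \<omega> > y} = {\<omega>\<in>space M. y < \<sigma> z \<omega> \<and> \<sigma> z \<omega> \<le> l} \<union> {\<omega>\<in>space M. \<sigma> z \<omega> > l}"
    show ?thesis unfolding eq by (rule finite_measure_Union) auto
  qed
  then show ?thesis using prob_gt by simp
qed

lemma F_pos: "F x > 0"
proof (rule ccontr)
  assume "\<not> F x > 0"
  then have F0: "F x = 0" using F_nonneg[of x] by simp
  have ev: "eventually (\<lambda>u. tailL M \<sigma> (u * 1) / tailL M \<sigma> u = 0) at_top"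
  proof (rule eventually_at_top_linorderI[of x])
    fix u assume "u \<ge> x"
    then have "F u = 0" using F_mono[of x u] F0 F_nonneg[of u] by simp
    then show "tailL M \<sigma> (u * 1) / tailL M \<sigma> u = 0" by (simp add: tailL_F)
  qed
  have "((\<lambda>u. tailL M \<sigma> (u * 1) / tailL M \<sigma> u) \<longlongrightarrow> 1) at_top"
    using slow[unfolded slowly_varying_def, rule_format, of 1] by simp
  moreover have "((\<lambda>u. tailL M \<sigma> (u * 1) / tailL M \<sigma> u) \<longlongrightarrow> 0) at_top"
    using ev by (rule tendsto_eventually)
  ultimately show False using tendsto_unique[OF trivial_limit_at_top_linorder] by force
qed

lemma doubling: "\<exists>x1>0. \<forall>x\<ge>x1. F (x/2) \<le> 9/8 * F x"
proof -
  have "((\<lambda>u. tailL M \<sigma> (u * (1/2)) / tailL M \<sigma> u) \<longlongrightarrow> 1) at_top"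
    using slow[unfolded slowly_varying_def, rule_format, of "1/2"] by simp
  then have "eventually (\<lambda>u. tailL M \<sigma> (u * (1/2)) / tailL M \<sigma> u > 8/9) at_top"
    by (rule order_tendstoD) simp
  then obtain x0 where x0: "\<And>u. u \<ge> x0 \<Longrightarrow> tailL M \<sigma> (u * (1/2)) / tailL M \<sigma> u > 8/9"
    unfolding eventually_at_top_linorder by auto
  show ?thesis
  proof (intro exI[of _ "max x0 1"] conjI allI impI)
    fix x assume "max x0 1 \<le> x"
    then have "tailL M \<sigma> (x * (1/2)) / tailL M \<sigma> x > 8/9" using x0 by auto
    then have "F x / F (x/2) > 8/9" by (simp add: tailL_F)
    then show "F (x/2) \<le> 9/8 * F x" using F_pos[of "x/2"] by (simp add: field_simps)
  qed auto
qed

definition x1 :: real where "x1 = (SOME x1. x1>0 \<and> (\<forall>x\<ge>x1. F (x/2) \<le> 9/8 * F x))"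

lemma x1_pos: "x1 > 0" and x1_dbl: "x \<ge> x1 \<Longrightarrow> F (x/2) \<le> 9/8 * F x"
  using someI_ex[OF doubling] unfolding x1_def[symmetric] by auto

lemma iter_dbl: "y / 2^j \<ge> x1 \<Longrightarrow> F (y / 2^(Suc j)) \<le> (9/8)^(Suc j) * F y"
proof (induction j)
  case 0
  then show ?case using x1_dbl[of y] by simp
next
  case (Suc j)
  have "y / 2^Suc j > 0" using Suc.prems x1_pos by linarith
  then have "y > 0" by (simp add: zero_less_divide_iff)
  then have "y / 2^j \<ge> y / 2^Suc j" by (simp add: divide_simps)
  then have "F (y / 2^(Suc j)) \<le> (9/8)^(Suc j) * F y" using Suc by simp
  moreover have "F ((y / 2^(Suc j))/2) \<le> 9/8 * F (y / 2^(Suc j))" using x1_dbl[of "y / 2^(Suc j)"] Suc.prems by simp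
  moreover have "(y / 2^(Suc j))/2 = y / 2^(Suc (Suc j))" by simp
  ultimately have "F (y / 2^(Suc (Suc j))) \<le> 9/8 * ((9/8)^(Suc j) * F y)" by simp
  then show ?case by simp
qed

lemma lower_iter: "x1 \<le> x \<Longrightarrow> x \<le> x1 * 2^n \<Longrightarrow> F x1 \<le> (9/8)^n * F x"
proof (induction n arbitrary: x)
  case 0
  then show ?case by simp
next
  case (Suc n)
  show ?case
  proof (cases "x1 \<le> x/2")
    case False
    then have "F x1 \<le> F (x/2)" by (intro F_mono) auto
    also have "\<dots> \<le> 9/8 * F x" using x1_dbl Suc.prems by simp
    also have "\<dots> \<le> (9/8)^Suc n * F x" using F_nonneg[of x]
      by (intro mult_right_mono) auto
    finally show ?thesis .
  next
    case True
    then have "x1 \<le> x/2" "x/2 \<le> x1 * 2^n" using Suc.prems x1_pos by auto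
    then have "F x1 \<le> (9/8)^n * F (x/2)" using Suc.IH by simp
    also have "\<dots> \<le> (9/8)^n * (9/8 * F x)" using x1_dbl[of x] Suc.prems
      by (intro mult_left_mono) auto
    finally show ?thesis by simp
  qed
qed

lemma power_lower: assumes "x \<ge> x1" shows "F x1 ^ 4 * x1 \<le> 2 * x * F x ^ 4"
proof -
  obtain n0 :: nat where "x / x1 < 2 ^ n0" using real_arch_pow[of 2 "x/x1"] by auto
  then have ex: "x \<le> x1 * 2^n0" using x1_pos by (simp add: field_simps)
  define n where "n = (LEAST n. x \<le> x1 * 2^n)"
  have n: "x \<le> x1 * 2^n" unfolding n_def by (rule LeastI[of _ n0]) (rule ex)
  have n2: "2^n \<le> 2 * x / x1"
  proof (cases n)
    case 0 then show ?thesis using assms x1_pos by (simp add: field_simps)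
  next
    case (Suc m)
    then have "\<not> x \<le> x1 * 2^m" unfolding n_def using not_less_Least[of m "\<lambda>n. x \<le> x1 * 2^n"] by (simp add: n_def)
    then show ?thesis using Suc x1_pos by (simp add: field_simps)
  qed
  have "F x1 \<le> (9/8)^n * F x" by (rule lower_iter[OF assms n])
  then have "F x1 ^ 4 \<le> ((9/8)^n * F x)^4" using F_nonneg[of x1] by (intro power_mono) auto
  also have "\<dots> = ((9/8)^4)^n * F x ^ 4" by (simp add: power_mult_distrib flip: power_mult)
  also have "\<dots> \<le> 2^n * F x ^ 4"
    by (intro mult_right_mono power_mono) (auto simp: F_nonneg numeral_eq_Suc)
  also have "\<dots> \<le> (2 * x / x1) * F x ^ 4" by (intro mult_right_mono n2) (auto simp: F_nonneg)
  finally show ?thesis using x1_pos by (simp add: field_simps)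
qed

lemma xF2_lim: "filterlim (\<lambda>x. x * F x ^ 2) at_top at_top"
proof -
  define c where "c = F x1 ^ 4 * x1 / 2"
  have c: "c > 0" unfolding c_def using F_pos[of x1] x1_pos by simp
  have "filterlim (\<lambda>x. sqrt (c * x)) at_top at_top"
    using c by real_asymp
  moreover have "eventually (\<lambda>x. sqrt (c * x) \<le> x * F x ^ 2) at_top"
  proof (rule eventually_at_top_linorderI[of x1])
    fix x assume x: "x \<ge> x1"
    have "x * (F x1 ^ 4 * x1) \<le> x * (2 * x * F x ^ 4)" using power_lower[OF x] x x1_pos
      by (intro mult_left_mono) auto
    then have "c * x \<le> (x * F x ^ 2)^2" unfolding c_def
      by (simp add: power2_eq_square field_simps power4_eq_xxxx)
    then show "sqrt (c * x) \<le> x * F x ^ 2" using x x1_pos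
      by (metis F_nonneg abs_of_nonneg less_le_trans mult_nonneg_nonneg real_sqrt_le_mono real_sqrt_abs zero_le_power2 order.strict_implies_order)
  qed
  ultimately show ?thesis by (rule filterlim_at_top_mono)
qed

definition fy :: "real \<Rightarrow> real \<Rightarrow> real" where
  "fy y s = (if 0 \<le> s \<and> s \<le> y then s else 0)"

lemma fy_nonneg: "0 \<le> fy y s" by (simp add: fy_def)
lemma fy_le: "fy y s \<le> max y 0" by (simp add: fy_def)

lemma pointwise:
  assumes N: "y \<le> x1 * 2^N"
  shows "fy y s \<le> x1 + (\<Sum>j<N. (if x1 \<le> y/2^j then y/2^j else 0) * indicator {y/2^(Suc j)<..} s)"
proof -
  let ?c = "\<lambda>j. (if x1 \<le> y/2^j then y/2^j else 0) * indicator {y/2^(Suc j)<..} s"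
  have c0: "\<And>j. 0 \<le> ?c j" using x1_pos by (auto simp: indicator_def)
  have S0: "0 \<le> (\<Sum>j<N. ?c j)" by (rule sum_nonneg) (use c0 in auto)
  show ?thesis
  proof (cases "0 \<le> s \<and> s \<le> y \<and> x1 < s")
    case False
    then have "fy y s \<le> x1" using x1_pos by (auto simp: fy_def)
    then show ?thesis using S0 by linarith
  next
    case True
    then have s: "0 \<le> s" "s \<le> y" "x1 < s" by auto
    have exN: "s > y / 2^(Suc N)"
    proof -
      have "y / 2^(Suc N) \<le> x1 * 2^N / 2^Suc N" using N by (intro divide_right_mono) auto
      also have "\<dots> = x1 / 2" by simp
      finally show ?thesis using s x1_pos by linarith
    qed
    define j0 where "j0 = (LEAST j. s > y / 2^(Suc j))"
    have j0: "s > y / 2^(Suc j0)" unfolding j0_def by (rule LeastI[of _ N]) (rule exN)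
    have j0N: "j0 \<le> N" unfolding j0_def by (rule Least_le) (rule exN)
    have sle: "s \<le> y / 2^j0"
    proof (cases j0)
      case 0 then show ?thesis using s by simp
    next
      case (Suc k)
      then have "\<not> s > y / 2^(Suc k)" unfolding j0_def using not_less_Least[of k "\<lambda>j. s > y / 2^(Suc j)"]
        by (simp add: j0_def)
      then show ?thesis using Suc by simp
    qed
    have j0N': "j0 < N"
    proof (rule ccontr)
      assume "\<not> j0 < N"
      then have "j0 = N" using j0N by simp
      then have "s \<le> y / 2^N" using sle by simp
      also have "\<dots> \<le> x1" using N by (simp add: field_simps)
      finally show False using s by simp
    qed
    have "?c j0 = y / 2^j0" using j0 sle s by (auto simp: indicator_def)
    then have "s \<le> ?c j0" using sle by simp
    also have "\<dots> \<le> (\<Sum>j<N. ?c j)" by (rule member_le_sum) (use c0 j0N' in auto)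
    finally show ?thesis using s x1_pos by (simp add: fy_def)
  qed
qed

lemma fy_integrable: "integrable M (\<lambda>\<omega>. fy y (\<sigma> z \<omega>))"
  by (rule integrable_const_bound[where B="max y 0"]) (auto simp: fy_def)

lemma ind_integral: "integral\<^sup>L M (\<lambda>\<omega>. indicator {a<..} (\<sigma> z \<omega>)::real) = F a"
proof -
  have "integral\<^sup>L M (\<lambda>\<omega>. indicator {a<..} (\<sigma> z \<omega>)::real) = integral\<^sup>L M (indicator {\<omega>\<in>space M. \<sigma> z \<omega> > a})"
    by (rule Bochner_Integration.integral_cong) (auto simp: indicator_def)
  also have "\<dots> = F a" using prob_gt by simp
  finally show ?thesis .
qed

lemma exp_bound:
  assumes y: "y > 0"
  shows "integral\<^sup>L M (\<lambda>\<omega>. fy y (\<sigma> z \<omega>)) \<le> x1 + 3 * y * F y"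
proof -
  obtain N :: nat where "y / x1 < 2 ^ N" using real_arch_pow[of 2 "y/x1"] by auto
  then have N: "y \<le> x1 * 2^N" using x1_pos by (simp add: field_simps)
  define c where "c = (\<lambda>j::nat. (if x1 \<le> y/2^j then y/2^j else 0))"
  have int_ind: "integrable M (\<lambda>\<omega>. c j * indicator {y/2^(Suc j)<..} (\<sigma> z \<omega>)::real)" for j
    by (rule integrable_const_bound[where B="\<bar>c j\<bar>"]) (auto simp: indicator_def)
  have "integral\<^sup>L M (\<lambda>\<omega>. fy y (\<sigma> z \<omega>)) \<le> integral\<^sup>L M (\<lambda>\<omega>. x1 + (\<Sum>j<N. c j * indicator {y/2^(Suc j)<..} (\<sigma> z \<omega>)))"
  proof (rule integral_mono[OF fy_integrable])
    show "integrable M (\<lambda>\<omega>. x1 + (\<Sum>j<N. c j * indicator {y/2^(Suc j)<..} (\<sigma> z \<omega>)))"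
      by (intro Bochner_Integration.integrable_add integrable_const Bochner_Integration.integrable_sum int_ind)
    fix \<omega> show "fy y (\<sigma> z \<omega>) \<le> x1 + (\<Sum>j<N. c j * indicator {y/2^(Suc j)<..} (\<sigma> z \<omega>))"
      unfolding c_def by (rule pointwise[OF N])
  qed
  also have "\<dots> = x1 + (\<Sum>j<N. c j * F (y/2^(Suc j)))"
  proof -
    have "integral\<^sup>L M (\<lambda>\<omega>. x1 + (\<Sum>j<N. c j * indicator {y/2^(Suc j)<..} (\<sigma> z \<omega>)))
       = integral\<^sup>L M (\<lambda>\<omega>. x1) + integral\<^sup>L M (\<lambda>\<omega>. (\<Sum>j<N. c j * indicator {y/2^(Suc j)<..} (\<sigma> z \<omega>)))"
      by (rule Bochner_Integration.integral_add) (intro integrable_const Bochner_Integration.integrable_sum int_ind)+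
    also have "integral\<^sup>L M (\<lambda>\<omega>. (\<Sum>j<N. c j * indicator {y/2^(Suc j)<..} (\<sigma> z \<omega>)))
       = (\<Sum>j<N. integral\<^sup>L M (\<lambda>\<omega>. c j * indicator {y/2^(Suc j)<..} (\<sigma> z \<omega>)))"
      by (rule Bochner_Integration.integral_sum) (rule int_ind)
    also have "\<dots> = (\<Sum>j<N. c j * F (y/2^(Suc j)))"
      by (intro sum.cong refl) (simp only: Bochner_Integration.integral_mult_right_zero ind_integral)
    finally show ?thesis by (simp add: prob_space)
  qed
  also have "(\<Sum>j<N. c j * F (y/2^(Suc j))) \<le> (\<Sum>j<N. 9/8 * y * F y * (9/16)^j)"
  proof (rule sum_mono)
    fix j assume "j \<in> {..<N}"
    show "c j * F (y/2^(Suc j)) \<le> 9/8 * y * F y * (9/16)^j"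
    proof (cases "x1 \<le> y/2^j")
      case True
      then have "c j * F (y/2^(Suc j)) \<le> y/2^j * ((9/8)^(Suc j) * F y)"
      proof -
        have "c j = y/2^j" using True by (simp add: c_def)
        moreover have "y/2^j \<ge> 0" using y by simp
        ultimately show ?thesis using iter_dbl[OF True] by (metis mult_left_mono)
      qed
      also have "\<dots> = 9/8 * y * F y * (9/16)^j"
      proof -
        have "(2::real)^j * 8^j = 16^j" by (simp flip: power_mult_distrib)
        then show ?thesis by (simp add: field_simps power_divide)
      qed
      finally show ?thesis .
    qed (use y F_nonneg[of y] in \<open>auto simp: c_def\<close>)
  qed
  also have "(\<Sum>j<N. 9/8 * y * F y * (9/16::real)^j) = 9/8 * y * F y * (\<Sum>j<N. (9/16::real)^j)"
    by (simp add: sum_distrib_left)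
  also have "\<dots> \<le> 9/8 * y * F y * (16/7)"
  proof (rule mult_left_mono)
    have "(\<Sum>j<N. (9/16::real)^j) = ((9/16)^N - 1) / (9/16 - 1)" by (rule geometric_sum) simp
    also have "\<dots> \<le> 16/7" by (simp add: field_simps)
    finally show "(\<Sum>j<N. (9/16::real)^j) \<le> 16/7" .
  qed (use y F_nonneg[of y] in auto)
  finally have "integral\<^sup>L M (\<lambda>\<omega>. fy y (\<sigma> z \<omega>)) \<le> x1 + 9/8 * y * F y * (16/7)" by simp
  moreover have "0 \<le> y * F y" using y F_nonneg[of y] by simp
  ultimately show ?thesis by linarith
qed

lemma prob_all_le:
  assumes indep: "indep_vars (\<lambda>_. borel) \<sigma> UNIV" and J: "finite J" "J \<noteq> {}"
  shows "prob {\<omega>\<in>space M. \<forall>i\<in>J. \<sigma> i \<omega> \<le> l} = (1 - F l) ^ card J"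
proof -
  have "prob (\<Inter>i\<in>J. \<sigma> i -` {..l} \<inter> space M) = (\<Prod>i\<in>J. prob (\<sigma> i -` {..l} \<inter> space M))"
    by (rule indep_varsD[OF indep J(2) J(1)]) auto
  moreover have "(\<Inter>i\<in>J. \<sigma> i -` {..l} \<inter> space M) = {\<omega>\<in>space M. \<forall>i\<in>J. \<sigma> i \<omega> \<le> l}"
    using J by auto
  moreover have "prob (\<sigma> i -` {..l} \<inter> space M) = 1 - F l" for i
  proof -
    have "\<sigma> i -` {..l} \<inter> space M = {\<omega>\<in>space M. \<sigma> i \<omega> \<le> l}" by auto
    then show ?thesis using prob_le by simp
  qed
  ultimately show ?thesis by simp
qed

lemma pow_exp_bound:
  fixes a :: real assumes "0 \<le> a" "a \<le> 1"
  shows "(1 - a) ^ k \<le> exp (- a * k)"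
proof -
  have "(1 - a) ^ k \<le> exp (- a) ^ k"
    using assms by (intro power_mono) (auto simp: exp_ge_add_one_self[of "-a", simplified])
  also have "\<dots> = exp (- a * k)" by (simp add: exp_of_nat_mult[symmetric] mult.commute)
  finally show ?thesis .
qed

lemma prob_gap:
  assumes "y \<le> l"
  shows "prob {\<omega>\<in>space M. \<exists>z\<in>{-int K..int K}. y < \<sigma> z \<omega> \<and> \<sigma> z \<omega> \<le> l} \<le> (2 * real K + 1) * (F y - F l)"
proof -
  have "{\<omega>\<in>space M. \<exists>z\<in>{-int K..int K}. y < \<sigma> z \<omega> \<and> \<sigma> z \<omega> \<le> l}
      = (\<Union>z\<in>{-int K..int K}. {\<omega>\<in>space M. y < \<sigma> z \<omega> \<and> \<sigma> z \<omega> \<le> l})" by auto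
  then have "prob {\<omega>\<in>space M. \<exists>z\<in>{-int K..int K}. y < \<sigma> z \<omega> \<and> \<sigma> z \<omega> \<le> l}
      \<le> (\<Sum>z\<in>{-int K..int K}. prob {\<omega>\<in>space M. y < \<sigma> z \<omega> \<and> \<sigma> z \<omega> \<le> l})"
    by (simp add: measure_UNION_le)
  also have "\<dots> = (2 * real K + 1) * (F y - F l)"
  proof -
    have "(\<Sum>z\<in>{-int K..int K}. prob {\<omega>\<in>space M. y < \<sigma> z \<omega> \<and> \<sigma> z \<omega> \<le> l}) = (\<Sum>z\<in>{-int K..int K}. F y - F l)"
      using prob_between[OF assms] by simp
    also have "\<dots> = (2 * real K + 1) * (F y - F l)" by (simp add: algebra_simps)
    finally show ?thesis .
  qed
  finally show ?thesis .
qed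

lemma prob_markov:
  assumes y: "y > 0" and c: "c > 0"
  shows "prob {\<omega>\<in>space M. c \<le> (\<Sum>z\<in>{-int K..int K}. fy y (\<sigma> z \<omega>))} \<le> (2 * real K + 1) * (x1 + 3 * y * F y) / c"
proof -
  have int: "integrable M (\<lambda>\<omega>. \<Sum>z\<in>{-int K..int K}. fy y (\<sigma> z \<omega>))"
    by (intro Bochner_Integration.integrable_sum fy_integrable)
  have "prob {\<omega>\<in>space M. c \<le> (\<Sum>z\<in>{-int K..int K}. fy y (\<sigma> z \<omega>))}
     \<le> integral\<^sup>L M (\<lambda>\<omega>. \<Sum>z\<in>{-int K..int K}. fy y (\<sigma> z \<omega>)) / c"
    by (rule integral_Markov_inequality_measure[OF int _ _ c, of "space M"])
       (auto intro!: sum_nonneg simp: fy_nonneg)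
  also have "integral\<^sup>L M (\<lambda>\<omega>. \<Sum>z\<in>{-int K..int K}. fy y (\<sigma> z \<omega>))
     = (\<Sum>z\<in>{-int K..int K}. integral\<^sup>L M (\<lambda>\<omega>. fy y (\<sigma> z \<omega>)))"
    by (rule Bochner_Integration.integral_sum) (rule fy_integrable)
  also have "\<dots> \<le> (\<Sum>z\<in>{-int K..int K}. x1 + 3 * y * F y)"
    by (intro sum_mono exp_bound y)
  also have "\<dots> = (2 * real K + 1) * (x1 + 3 * y * F y)" by (simp add: algebra_simps)
  finally show ?thesis using c by (simp add: divide_right_mono)
qed

lemma tailL_ge1: "tailL M \<sigma> x \<ge> 1"
  using F_pos[of x] F_le1[of x] by (simp add: tailL_F)

lemma tailL_mono: "x \<le> x' \<Longrightarrow> tailL M \<sigma> x \<le> tailL M \<sigma> x'"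
  using F_mono[of x x'] F_pos[of x'] by (simp add: tailL_F frac_le)

lemma ellt_below:
  assumes t: "t \<ge> 0" and s: "0 \<le> s" "s < ellt M \<sigma> t"
  shows "s * tailL M \<sigma> s < t"
proof (rule ccontr)
  assume "\<not> s * tailL M \<sigma> s < t"
  then have "s \<in> {s. s \<ge> 0 \<and> s * tailL M \<sigma> s \<ge> t}" using s by auto
  then have "ellt M \<sigma> t \<le> s" unfolding ellt_def by (rule cInf_lower) (auto intro: bdd_belowI[of _ 0])
  then show False using s by simp
qed

lemma ellt_lim: "filterlim (ellt M \<sigma>) at_top at_top"
proof (subst filterlim_at_top, intro allI)
  fix B :: real
  define B' where "B' = max B 0"
  show "eventually (\<lambda>t. B \<le> ellt M \<sigma> t) at_top"
  proof (rule eventually_at_top_linorderI[of "B' * tailL M \<sigma> B' + 1"])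
    fix t assume t: "t \<ge> B' * tailL M \<sigma> B' + 1"
    have B'0: "B' \<ge> 0" unfolding B'_def by simp
    have L0: "tailL M \<sigma> B' \<ge> 1" by (rule tailL_ge1)
    have t0: "t \<ge> 0" using t B'0 L0 by (smt (verit) mult_nonneg_nonneg)
    have ne: "t \<in> {s. s \<ge> 0 \<and> s * tailL M \<sigma> s \<ge> t}" using t0 tailL_ge1[of t]
      by (auto simp: mult_le_cancel_left1)
    have "B' \<le> ellt M \<sigma> t" unfolding ellt_def
    proof (rule cInf_greatest)
      show "{s. s \<ge> 0 \<and> s * tailL M \<sigma> s \<ge> t} \<noteq> {}" using ne by auto
      fix s assume "s \<in> {s. s \<ge> 0 \<and> s * tailL M \<sigma> s \<ge> t}"
      then have s: "s \<ge> 0" "s * tailL M \<sigma> s \<ge> t" by auto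
      show "B' \<le> s"
      proof (rule ccontr)
        assume "\<not> B' \<le> s"
        then have "s * tailL M \<sigma> s \<le> B' * tailL M \<sigma> B'"
          using s tailL_mono[of s B'] tailL_ge1[of s] by (intro mult_mono) auto
        then show False using s t by simp
      qed
    qed
    then show "B \<le> ellt M \<sigma> t" unfolding B'_def by simp
  qed
qed

lemma t_lower:
  assumes t: "t > 0" and l: "ellt M \<sigma> t \<ge> 2 * x1"
  shows "t > 4/9 * ellt M \<sigma> t / F (ellt M \<sigma> t)"
proof -
  define l where "l = ellt M \<sigma> t"
  have l0: "l > 0" using l x1_pos unfolding l_def by simp
  have "l/2 * tailL M \<sigma> (l/2) < t"
    using ellt_below[of t "l/2"] t l0 unfolding l_def by simp
  moreover have "F (l/2) \<le> 9/8 * F l" using x1_dbl[of l] l x1_pos unfolding l_def by simp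
  then have "tailL M \<sigma> (l/2) \<ge> 8/9 / F l" using F_pos[of l] F_pos[of "l/2"]
    by (simp add: tailL_F field_simps)
  moreover have "l/2 * (8/9 / F l) \<le> l/2 * tailL M \<sigma> (l/2)"
    using calculation(2) l0 by (intro mult_left_mono) auto
  ultimately have "l/2 * (8/9 / F l) < t" by linarith
  then show ?thesis unfolding l_def[symmetric] by (simp add: field_simps)
qed

lemma Z1_meas[measurable]: "Z1 M \<sigma> t \<in> measurable M (count_space UNIV)"
  unfolding Z1_def by measurable

lemma Z2_meas[measurable]: "Z2 M \<sigma> t \<in> measurable M (count_space UNIV)"
  unfolding Z2_def by measurable

lemma St_meas[measurable]: "St M \<sigma> t \<in> borel_measurable M"
proof -
  have m1: "(\<lambda>\<omega>. \<Sum>z\<in>{Z2 M \<sigma> t \<omega> <..< b}. \<sigma> z \<omega>) \<in> borel_measurable M" for b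
    by (rule measurable_compose_countable'[where f="\<lambda>a \<omega>. \<Sum>z\<in>{a<..<b}. \<sigma> z \<omega>" and I=UNIV]) auto
  show ?thesis unfolding St_def
    by (rule measurable_compose_countable'[where f="\<lambda>b \<omega>. \<Sum>z\<in>{Z2 M \<sigma> t \<omega> <..< b}. \<sigma> z \<omega>" and I=UNIV, OF m1]) auto
qed

lemma dt_meas[measurable]: "(\<lambda>\<omega>. real_of_int (dt M \<sigma> t \<omega>)) \<in> borel_measurable M"
proof -
  have m1: "(\<lambda>\<omega>. real_of_int (max \<bar>b\<bar> \<bar>Z2 M \<sigma> t \<omega>\<bar>)) \<in> borel_measurable M" for b
    by (rule measurable_compose_countable'[where f="\<lambda>a \<omega>. real_of_int (max \<bar>b\<bar> \<bar>a\<bar>)" and I=UNIV]) auto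
  show ?thesis unfolding dt_def
    by (rule measurable_compose_countable'[where f="\<lambda>b \<omega>. real_of_int (max \<bar>b\<bar> \<bar>Z2 M \<sigma> t \<omega>\<bar>)" and I=UNIV, OF m1]) auto
qed

lemma eventA_meas: "event_A M \<sigma> h t \<in> sets M"
  unfolding event_A_def by measurable

lemma sets_test: "{\<omega>\<in>space M. \<forall>i\<in>int ` {1..K}. \<sigma> i \<omega> \<le> l} \<in> sets M"
   "{\<omega>\<in>space M. \<exists>z\<in>{-int K..int K}. y < \<sigma> z \<omega> \<and> \<sigma> z \<omega> \<le> l} \<in> sets M"
   "{\<omega>\<in>space M. c \<le> (\<Sum>z\<in>{-int K..int K}. fy y (\<sigma> z \<omega>))} \<in> sets M"
  unfolding fy_def by measurable

lemma main_step:
  assumes indep: "indep_vars (\<lambda>_. borel) \<sigma> UNIV"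
    and pos: "\<And>z. AE \<omega> in M. \<sigma> z \<omega> > 0"
    and t: "t > 0" and H4: "h t \<ge> 4"
    and lx: "ellt M \<sigma> t \<ge> 2 * x1"
    and c1: "tailL M \<sigma> (ellt M \<sigma> t / (h t)^3) > tailL M \<sigma> (ellt M \<sigma> t) * (1 - 1 / h t)"
    and hr: "(h t)^2 \<le> tailL M \<sigma> (ellt M \<sigma> t)"
  shows "prob (event_A M \<sigma> h t) \<ge> 1 - (2 * exp (- sqrt (h t)) + (2 * sqrt (h t) + 3) / (h t - 1)
            + 45/2 * (x1 / (ellt M \<sigma> t * F (ellt M \<sigma> t)^2) + 6 / h t))"
proof -
  define H where "H = h t"
  define l where "l = ellt M \<sigma> t"
  define p where "p = F l"
  have p: "p > 0" "p \<le> 1" unfolding p_def using F_pos F_le1 by auto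
  have H: "H \<ge> 4" using H4 unfolding H_def by simp
  have l0: "l > 0" using lx x1_pos unfolding l_def by simp
  define y where "y = l / H^3"
  have y0: "y > 0" unfolding y_def using l0 H by simp
  have yl: "y \<le> l"
  proof -
    have "H^3 \<ge> 1" using H by (simp add: one_le_power)
    then have "l / H^3 \<le> l / 1" using l0 H by (intro divide_left_mono) auto
    then show ?thesis unfolding y_def by simp
  qed
  have Fy0: "F y > 0" by (rule F_pos)
  have c1': "1 / F y > 1 / p * (1 - 1 / H)" using c1 unfolding H_def l_def y_def p_def by (simp add: tailL_F)
  have Fy1: "F y * (1 - 1/H) < p"
  proof -
    have "1 / p * (1 - 1/H) * (p * F y) < 1 / F y * (p * F y)"
      using c1' p Fy0 by (intro mult_strict_right_mono) auto
    then have "p * (F y * (1 - 1/H)) < p * p" using p Fy0 by (simp add: field_simps)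
    then show ?thesis using p(1,2) by (simp add: mult_less_cancel_left_pos)
  qed
  have FyH: "F y < p * H / (H - 1)"
  proof -
    have "F y * (H - 1) < p * H" using Fy1 H by (simp add: field_simps)
    then show ?thesis using H by (simp add: field_simps)
  qed
  have Fy2: "F y - p \<le> p / (H - 1)"
  proof -
    have "p * H / (H - 1) - p = p / (H - 1)" using H by (simp add: field_simps)
    then show ?thesis using FyH by linarith
  qed
  have Fy3: "F y \<le> 2 * p"
  proof -
    have "p * H / (H - 1) \<le> 2 * p" using H p by (simp add: field_simps)
    then show ?thesis using FyH by linarith
  qed
  define g where "g = sqrt H"
  have g2: "g^2 = H" unfolding g_def using H by simp
  have g: "g \<ge> 2" unfolding g_def using H real_sqrt_le_mono[of 4 H] by simp
  define K where "K = nat \<lceil>g / p\<rceil>"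
  have gp1: "g / p \<ge> 1" using g p by (simp add: field_simps)
  have K1: "real K \<ge> g / p" unfolding K_def by linarith
  have K2: "real K \<le> 2 * g / p"
  proof -
    have "real K \<le> g / p + 1" unfolding K_def using gp1 by linarith
    then show ?thesis using gp1 by simp
  qed
  have Kpos: "K \<ge> 1" using K1 gp1 by simp
  have tl: "t > 4/9 * l / p" using t_lower[OF t lx] unfolding l_def p_def .
  define B1 where "B1 = {\<omega>\<in>space M. \<forall>i\<in>int ` {1..K}. \<sigma> i \<omega> \<le> l}"
  define B1' where "B1' = {\<omega>\<in>space M. \<forall>i\<in>(\<lambda>n. - int n) ` {0..K}. \<sigma> i \<omega> \<le> l}"
  define B2 where "B2 = {\<omega>\<in>space M. \<exists>z\<in>{-int K..int K}. y < \<sigma> z \<omega> \<and> \<sigma> z \<omega> \<le> l}"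
  define cc where "cc = t / (H * K)"
  define B3 where "B3 = {\<omega>\<in>space M. cc \<le> (\<Sum>z\<in>{-int K..int K}. fy y (\<sigma> z \<omega>))}"
  have sB: "B1 \<in> sets M" "B1' \<in> sets M" "B2 \<in> sets M" "B3 \<in> sets M"
    unfolding B1_def B1'_def B2_def B3_def fy_def by measurable
  have PB1: "prob B1 \<le> exp (- g)"
  proof -
    have "prob B1 = (1 - p) ^ card (int ` {1..K})" unfolding B1_def p_def
      by (rule prob_all_le[OF indep]) (use Kpos in auto)
    also have "card (int ` {1..K}) = K" by (simp add: card_image)
    also have "(1 - p) ^ K \<le> exp (- p * K)" using p by (intro pow_exp_bound) auto
    also have "\<dots> \<le> exp (- g)" using K1 p by (simp add: field_simps)
    finally show ?thesis .
  qed
  have PB1': "prob B1' \<le> exp (- g)"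
  proof -
    have "prob B1' = (1 - p) ^ card ((\<lambda>n. - int n) ` {0..K})" unfolding B1'_def p_def
      by (rule prob_all_le[OF indep]) auto
    also have "card ((\<lambda>n. - int n) ` {0..K}) = Suc K" by (subst card_image) (auto simp: inj_on_def)
    also have "(1 - p) ^ Suc K \<le> exp (- p * Suc K)" using p by (intro pow_exp_bound) auto
    also have "\<dots> \<le> exp (- g)" using K1 p by (simp add: field_simps)
    finally show ?thesis .
  qed
  have PB2: "prob B2 \<le> (2 * g + 3) / (H - 1)"
  proof -
    have "prob B2 \<le> (2 * real K + 1) * (F y - F l)" unfolding B2_def by (rule prob_gap[OF yl])
    also have "\<dots> \<le> (2 * real K + 1) * (p / (H - 1))" using Fy2 unfolding p_def
      by (intro mult_left_mono) auto
    also have "\<dots> = ((2 * real K + 1) * p) / (H - 1)" by simp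
    also have "\<dots> \<le> (2 * g + 3) / (H - 1)"
    proof (rule divide_right_mono)
      have "(2 * real K + 1) * p \<le> (2 * (g / p + 1) + 1) * p"
        using K2 p gp1 K_def by (intro mult_right_mono) (auto, linarith)
      also have "\<dots> = 2 * g + 3 * p" using p by (simp add: field_simps)
      finally show "(2 * real K + 1) * p \<le> 2 * g + 3" using p by linarith
    qed (use H in auto)
    finally show ?thesis .
  qed
  have PB3: "prob B3 \<le> 45/2 * (x1 / (l * p^2) + 6 / H)"
  proof -
    have cc0: "cc > 0" unfolding cc_def using t H Kpos by simp
    have "prob B3 \<le> (2 * real K + 1) * (x1 + 3 * y * F y) / cc" unfolding B3_def
      by (rule prob_markov[OF y0 cc0])
    also have "\<dots> = ((2 * real K + 1) * K) * H * (x1 + 3 * y * F y) / t"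
      unfolding cc_def using t H Kpos by (simp add: field_simps)
    also have "\<dots> \<le> (10 * H / p^2) * H * (x1 + 6 * l * p / H^3) / t"
    proof (intro divide_right_mono mult_mono)
      have "2 * real K + 1 \<le> 5 * g / p" using K2 gp1 by simp
      moreover have "real K \<le> 2 * g / p" by (rule K2)
      ultimately have "(2 * real K + 1) * K \<le> (5 * g / p) * (2 * g / p)"
        by (intro mult_mono) auto
      also have "\<dots> = 10 * g^2 / p^2" by (simp add: power2_eq_square field_simps)
      finally show "(2 * real K + 1) * K \<le> 10 * H / p^2" using g2 by simp
      have "3 * y * F y \<le> 3 * y * (2 * p)" using Fy3 y0 by simp
      then show "x1 + 3 * y * F y \<le> x1 + 6 * l * p / H^3" unfolding y_def by simp
    qed (use t H p x1_pos y0 Fy0 in auto)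
    also have "\<dots> \<le> (10 * H / p^2) * H * (x1 + 6 * l * p / H^3) * (9 * p / (4 * l))"
    proof -
      have "1 / t \<le> 9 * p / (4 * l)" using tl t p l0 by (simp add: field_simps)
      moreover have "0 \<le> (10 * H / p^2) * H * (x1 + 6 * l * p / H^3)" using H p l0 x1_pos by simp
      ultimately show ?thesis by (metis divide_inverse inverse_eq_divide mult_left_mono)
    qed
    also have "\<dots> = 45/2 * (H^2 * x1 / (p * l) + 6 / H)"
      using H p l0 by (simp add: field_simps power2_eq_square power3_eq_cube)
    also have "\<dots> \<le> 45/2 * (x1 / (l * p^2) + 6 / H)"
    proof -
      have "H^2 \<le> 1 / p" using hr unfolding H_def l_def p_def by (simp add: tailL_F)
      then have "H^2 * x1 / (p * l) \<le> (1/p) * x1 / (p * l)" using x1_pos p l0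
        by (intro divide_right_mono mult_right_mono) auto
      moreover have "(1/p) * x1 / (p * l) = x1 / (l * p^2)" by (simp add: power2_eq_square field_simps)
      ultimately have "H^2 * x1 / (p * l) \<le> x1 / (l * p^2)" by linarith
      then show ?thesis by (intro mult_left_mono add_right_mono) auto
    qed
    finally show ?thesis .
  qed
  have AEpos: "AE \<omega> in M. \<forall>z. \<sigma> z \<omega> > 0" using pos by (simp add: AE_all_countable)
  have incl: "AE \<omega> in M. \<omega> \<in> space M - (B1 \<union> B1' \<union> B2 \<union> B3) \<longrightarrow> \<omega> \<in> event_A M \<sigma> h t"
    using AEpos
  proof eventually_elim
    case (elim \<omega>)
    show ?case
    proof
      assume \<omega>: "\<omega> \<in> space M - (B1 \<union> B1' \<union> B2 \<union> B3)"
      have T: "(\<Sum>z\<in>{-int K..int K}. (if 0 \<le> \<sigma> z \<omega> \<and> \<sigma> z \<omega> \<le> y then \<sigma> z \<omega> else 0)) * K < t / h t"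
      proof -
        have "(\<Sum>z\<in>{-int K..int K}. fy y (\<sigma> z \<omega>)) < t / (H * K)" using \<omega> unfolding B3_def cc_def by auto
        then have "(\<Sum>z\<in>{-int K..int K}. fy y (\<sigma> z \<omega>)) * K < t / (H * K) * K"
          using Kpos by (intro mult_strict_right_mono) auto
        then show ?thesis using Kpos unfolding fy_def H_def by simp
      qed
      have "St M \<sigma> t \<omega> * real_of_int (dt M \<sigma> t \<omega>) < t / h t"
        unfolding St_def dt_def Z1_def Z2_def l_def[symmetric]
      proof (rule det_bound[OF Kpos _ _ _ _ T])
        show "\<exists>n\<in>{1..K}. \<sigma> (int n) \<omega> > l" using \<omega> unfolding B1_def by (auto simp: not_le)
        show "\<exists>n\<in>{0..K}. \<sigma> (- int n) \<omega> > l" using \<omega> unfolding B1'_def by (auto simp: not_le)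
        show "\<forall>z\<in>{-int K..int K}. \<sigma> z \<omega> > 0" using elim by auto
        show "\<forall>z\<in>{-int K..int K}. \<not> (y < \<sigma> z \<omega> \<and> \<sigma> z \<omega> \<le> l)" using \<omega> unfolding B2_def by auto
      qed
      then show "\<omega> \<in> event_A M \<sigma> h t" using \<omega> unfolding event_A_def by auto
    qed
  qed
  have "prob (space M - (B1 \<union> B1' \<union> B2 \<union> B3)) \<le> prob (event_A M \<sigma> h t)"
    by (rule finite_measure_mono_AE[OF incl eventA_meas])
  moreover have "prob (space M - (B1 \<union> B1' \<union> B2 \<union> B3)) = 1 - prob (B1 \<union> B1' \<union> B2 \<union> B3)"
    using sB by (intro prob_compl) auto
  moreover have "prob (B1 \<union> B1' \<union> B2 \<union> B3) \<le> prob B1 + prob B1' + prob B2 + prob B3"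
    using sB by (meson add_mono measure_Un_le order_trans sets.Un order_refl)
  ultimately show ?thesis using PB1 PB1' PB2 PB3
    unfolding H_def[symmetric] l_def[symmetric] p_def[symmetric] g_def[symmetric] by linarith
qed

end
theorem proposition3p9:
  fixes M :: "'a measure" and \<sigma> :: "int \<Rightarrow> 'a \<Rightarrow> real" and h :: "real \<Rightarrow> real"
  assumes "prob_space M"
    and "\<And>z. \<sigma> z \<in> borel_measurable M"
    and "prob_space.indep_vars M (\<lambda>_. borel) \<sigma> UNIV"
    and "\<And>z. distr M borel (\<sigma> z) = distr M borel (\<sigma> 0)"
    and "\<And>z. AE \<omega> in M. \<sigma> z \<omega> > 0"
    and "slowly_varying (tailL M \<sigma>)"
    and "filterlim h at_top at_top"
    and "(\<lambda>t. (h t)\<^sup>2) \<in> o[at_top](\<lambda>t. rt M \<sigma> t)"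
    and "eventually (\<lambda>t. tailL M \<sigma> (ellt M \<sigma> t / (h t)^3) > tailL M \<sigma> (ellt M \<sigma> t) * (1 - 1 / h t)
                        \<and> tailL M \<sigma> (ellt M \<sigma> t * (h t)^3) < tailL M \<sigma> (ellt M \<sigma> t) * (1 + 1 / h t)) at_top"
  shows "((\<lambda>t. measure M (event_A M \<sigma> h t)) \<longlongrightarrow> 1) at_top"
proof -
  interpret setting M \<sigma>
    by (rule setting.intro[OF assms(1)], rule setting_axioms.intro, fact assms(2), fact assms(4), fact assms(6))
  define b where "b = (\<lambda>t. 2 * exp (- sqrt (h t)) + (2 * sqrt (h t) + 3) / (h t - 1)
            + 45/2 * (x1 / (ellt M \<sigma> t * F (ellt M \<sigma> t)^2) + 6 / h t))"
  have l1: "((\<lambda>t. exp (- sqrt (h t))) \<longlongrightarrow> 0) at_top"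
  proof (rule filterlim_compose[OF _ assms(7)])
    show "((\<lambda>x::real. exp (- sqrt x)) \<longlongrightarrow> 0) at_top" by real_asymp
  qed
  have l2: "((\<lambda>t. (2 * sqrt (h t) + 3) / (h t - 1)) \<longlongrightarrow> 0) at_top"
  proof (rule filterlim_compose[OF _ assms(7)])
    show "((\<lambda>x::real. (2 * sqrt x + 3) / (x - 1)) \<longlongrightarrow> 0) at_top" by real_asymp
  qed
  have l3: "((\<lambda>t. 6 / h t) \<longlongrightarrow> 0) at_top"
  proof (rule filterlim_compose[OF _ assms(7)])
    show "((\<lambda>x::real. 6 / x) \<longlongrightarrow> 0) at_top" by real_asymp
  qed
  have l4: "((\<lambda>t. x1 / (ellt M \<sigma> t * F (ellt M \<sigma> t)^2)) \<longlongrightarrow> 0) at_top"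
  proof (rule filterlim_compose[OF _ filterlim_compose[OF xF2_lim ellt_lim]])
    show "((\<lambda>x::real. x1 / x) \<longlongrightarrow> 0) at_top" by (rule tendsto_divide_0[OF tendsto_const filterlim_at_top_imp_at_infinity[OF filterlim_ident]])
  qed
  have "(b \<longlongrightarrow> 2 * 0 + 0 + 45/2 * (0 + 0)) at_top"
    unfolding b_def by (intro tendsto_add tendsto_mult tendsto_const l1 l2 l3 l4)
  then have b0: "(b \<longlongrightarrow> 0) at_top" by simp
  then have lo: "((\<lambda>t. 1 - b t) \<longlongrightarrow> 1) at_top"
    using tendsto_diff[OF tendsto_const[of 1] b0] by simp
  have ev1: "eventually (\<lambda>t. h t \<ge> 4) at_top" using assms(7) by (simp add: filterlim_at_top)
  have ev2: "eventually (\<lambda>t. ellt M \<sigma> t \<ge> 2 * x1) at_top" using ellt_lim by (simp add: filterlim_at_top)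
  have ev3: "eventually (\<lambda>t. norm ((h t)\<^sup>2) \<le> 1 * norm (rt M \<sigma> t)) at_top"
    by (rule landau_o.smallD[OF assms(8)]) simp
  have ev: "eventually (\<lambda>t. 1 - b t \<le> measure M (event_A M \<sigma> h t)) at_top"
    using ev1 ev2 ev3 assms(9) eventually_gt_at_top[of 0]
  proof eventually_elim
    case (elim t)
    have hr: "(h t)^2 \<le> tailL M \<sigma> (ellt M \<sigma> t)"
      using elim(3) tailL_ge1[of "ellt M \<sigma> t"] unfolding rt_def by simp
    show ?case unfolding b_def
      by (rule main_step[where h=h and t=t, OF assms(3) assms(5) elim(5) elim(1) elim(2) _ hr]) (use elim(4) in auto)
  qed
  have ev': "eventually (\<lambda>t. measure M (event_A M \<sigma> h t) \<le> 1) at_top"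
    by (simp add: measure_le_1)
  show ?thesis by (rule tendsto_sandwich[OF ev ev' lo tendsto_const])
qed

end
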